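(* Let $\rho=\mathrm{WC}$ on $L=L^1$, where $\mathrm{WC}(X):=\operatorname{ess\,sup}(-X)$. Then the market admits $\mathrm{WC}$-arbitrage if and only if it admits arbitrage of the first kind, and it admits strong $\mathrm{WC}$-arbitrage if and only if it admits arbitrage of the second kind.
   Context: Let $(\Omega,\mathcal{F},\mathbb{P})$ be a probability space and a market: riskless asset $S^0_0=1$, $S^0_1=1+r$, $r>-1$; risky assets $S^1,\dots,S^d$ with constants $S^i_0>0$ and real-valued $\mathcal{F}$-measurable $S^i_1$; returns $R^i:=(S^i_1-S^i_0)/S^i_0$. Standing assumptions: nonredundancy (if $\theta\in\mathbb{R}^{1+d}$ with $\sum_{i=0}^d\theta^iS^i_t=0$ a.s. for $t\in\{0,1\}$ then $\theta=0$), $R^i\in L^1$, $\mathbb{E}[R^i]\ne r$ for some $i$. Excess return of $\pi\in\mathbb{R}^d$: $X_\pi:=\pi\cdot(R-r\mathbf{1})$. $\pi$ is $\rho$-efficient if $\mathbb{E}[X_\pi]\ge0$ and no $\pi'$ has $\mathbb{E}[X_{\pi'}]\ge\mathbb{E}[X_\pi]$ and $\rho(X_{\pi'})\le\rho(X_\pi)$ with one inequality strict; $\rho$-arbitrage: no $\rho$-efficient portfolio exists; strong $\rho$-arbitrage: for every $\pi$ there is $\pi'$ with $\mathbb{E}[X_{\pi'}]>\mathbb{E}[X_\pi]$ and $\rho(X_{\pi'})<\rho(X_\pi)$. Arbitrage of the first kind: $(\theta^0,\theta)\in\mathbb{R}^{1+d}$ with $\theta^0S^0_0+\theta\cdot S_0\le0$,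 $\theta^0S^0_1+\theta\cdot S_1\ge0$ a.s., $\mathbb{P}[\theta^0S^0_1+\theta\cdot S_1>0]>0$. Arbitrage of the second kind: $(\theta^0,\theta)$ with $\theta^0S^0_0+\theta\cdot S_0<0$ and $\theta^0S^0_1+\theta\cdot S_1\ge0$ a.s. *)

theory Defs
  imports "HOL-Probability.Probability"
begin

text \<open>Market: riskless asset with S^0_0 = 1, S^0_1 = 1 + r; risky assets indexed by a
  finite type 'd, with initial prices S0 i > 0 and terminal prices S1 i (random variables).\<close>

definition ret :: "('d \<Rightarrow> real) \<Rightarrow> ('d \<Rightarrow> 'a \<Rightarrow> real) \<Rightarrow> 'd \<Rightarrow> 'a \<Rightarrow> real" where
  "ret S0 S1 i \<omega> = (S1 i \<omega> - S0 i) / S0 i"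

definition excess :: "real \<Rightarrow> ('d::finite \<Rightarrow> real) \<Rightarrow> ('d \<Rightarrow> 'a \<Rightarrow> real) \<Rightarrow> ('d \<Rightarrow> real) \<Rightarrow> 'a \<Rightarrow> real" where
  "excess r S0 S1 \<pi> \<omega> = (\<Sum>i\<in>UNIV. \<pi> i * (ret S0 S1 i \<omega> - r))"

definition WC :: "'a measure \<Rightarrow> ('a \<Rightarrow> real) \<Rightarrow> ereal" where
  "WC M X = esssup M (\<lambda>\<omega>. ereal (- X \<omega>))"

definition rho_efficient ::
  "'a measure \<Rightarrow> (('a \<Rightarrow> real) \<Rightarrow> ereal) \<Rightarrow> real \<Rightarrow> ('d::finite \<Rightarrow> real) \<Rightarrow> ('d \<Rightarrow> 'a \<Rightarrow> real) \<Rightarrow> ('d \<Rightarrow> real) \<Rightarrow> bool" where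
  "rho_efficient M \<rho> r S0 S1 \<pi> \<longleftrightarrow>
     0 \<le> integral\<^sup>L M (excess r S0 S1 \<pi>) \<and>
     \<not> (\<exists>\<pi>'. integral\<^sup>L M (excess r S0 S1 \<pi>') \<ge> integral\<^sup>L M (excess r S0 S1 \<pi>) \<and>
              \<rho> (excess r S0 S1 \<pi>') \<le> \<rho> (excess r S0 S1 \<pi>) \<and>
              (integral\<^sup>L M (excess r S0 S1 \<pi>') > integral\<^sup>L M (excess r S0 S1 \<pi>) \<or>
               \<rho> (excess r S0 S1 \<pi>') < \<rho> (excess r S0 S1 \<pi>)))"

definition rho_arbitrage ::
  "'a measure \<Rightarrow> (('a \<Rightarrow> real) \<Rightarrow> ereal) \<Rightarrow> real \<Rightarrow> ('d::finite \<Rightarrow> real) \<Rightarrow> ('d \<Rightarrow> 'a \<Rightarrow> real) \<Rightarrow> bool" where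
  "rho_arbitrage M \<rho> r S0 S1 \<longleftrightarrow> \<not> (\<exists>\<pi>. rho_efficient M \<rho> r S0 S1 \<pi>)"

definition strong_rho_arbitrage ::
  "'a measure \<Rightarrow> (('a \<Rightarrow> real) \<Rightarrow> ereal) \<Rightarrow> real \<Rightarrow> ('d::finite \<Rightarrow> real) \<Rightarrow> ('d \<Rightarrow> 'a \<Rightarrow> real) \<Rightarrow> bool" where
  "strong_rho_arbitrage M \<rho> r S0 S1 \<longleftrightarrow>
     (\<forall>\<pi>. \<exists>\<pi>'. integral\<^sup>L M (excess r S0 S1 \<pi>') > integral\<^sup>L M (excess r S0 S1 \<pi>) \<and>
              \<rho> (excess r S0 S1 \<pi>') < \<rho> (excess r S0 S1 \<pi>))"

definition arbitrage_first_kind ::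
  "'a measure \<Rightarrow> real \<Rightarrow> ('d::finite \<Rightarrow> real) \<Rightarrow> ('d \<Rightarrow> 'a \<Rightarrow> real) \<Rightarrow> bool" where
  "arbitrage_first_kind M r S0 S1 \<longleftrightarrow>
     (\<exists>\<theta>0 \<theta>. \<theta>0 * 1 + (\<Sum>i\<in>UNIV. \<theta> i * S0 i) \<le> 0 \<and>
        (AE \<omega> in M. \<theta>0 * (1 + r) + (\<Sum>i\<in>UNIV. \<theta> i * S1 i \<omega>) \<ge> 0) \<and>
        measure M {\<omega> \<in> space M. \<theta>0 * (1 + r) + (\<Sum>i\<in>UNIV. \<theta> i * S1 i \<omega>) > 0} > 0)"

definition arbitrage_second_kind ::
  "'a measure \<Rightarrow> real \<Rightarrow> ('d::finite \<Rightarrow> real) \<Rightarrow> ('d \<Rightarrow> 'a \<Rightarrow> real) \<Rightarrow> bool" where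
  "arbitrage_second_kind M r S0 S1 \<longleftrightarrow>
     (\<exists>\<theta>0 \<theta>. \<theta>0 * 1 + (\<Sum>i\<in>UNIV. \<theta> i * S0 i) < 0 \<and>
        (AE \<omega> in M. \<theta>0 * (1 + r) + (\<Sum>i\<in>UNIV. \<theta> i * S1 i \<omega>) \<ge> 0))"

definition nonredundant ::
  "'a measure \<Rightarrow> real \<Rightarrow> ('d::finite \<Rightarrow> real) \<Rightarrow> ('d \<Rightarrow> 'a \<Rightarrow> real) \<Rightarrow> bool" where
  "nonredundant M r S0 S1 \<longleftrightarrow>
     (\<forall>\<theta>0 \<theta>. \<theta>0 * 1 + (\<Sum>i\<in>UNIV. \<theta> i * S0 i) = 0 \<and>
        (AE \<omega> in M. \<theta>0 * (1 + r) + (\<Sum>i\<in>UNIV. \<theta> i * S1 i \<omega>) = 0)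
        \<longrightarrow> \<theta>0 = 0 \<and> (\<forall>i. \<theta> i = 0))"

end

theory Submission
  imports Defs
begin

lemma excess_meas:
  assumes "\<And>i. S1 i \<in> borel_measurable M"
  shows "excess r S0 S1 \<pi> \<in> borel_measurable M"
  unfolding excess_def ret_def using assms by measurable

lemma excess_int:
  assumes "prob_space M" "\<And>i. integrable M (ret S0 S1 i)"
  shows "integrable M (excess r S0 S1 \<pi>)"
proof -
  interpret prob_space M by fact
  show ?thesis unfolding excess_def
    by (auto intro!: integrable_sum integrable_mult_right integrable_diff assms(2))
qed

lemma excess_add:
  "excess r S0 S1 (\<lambda>i. \<pi> i + \<pi>' i) \<omega> = excess r S0 S1 \<pi> \<omega> + excess r S0 S1 \<pi>' \<omega>"
  unfolding excess_def by (simp add: distrib_right sum.distrib)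

lemma excess_scale:
  "excess r S0 S1 (\<lambda>i. c * \<pi> i) \<omega> = c * excess r S0 S1 \<pi> \<omega>"
  unfolding excess_def by (simp add: sum_distrib_left mult.assoc)

lemma excess_theta:
  assumes "\<And>i. S0 i > 0"
  shows "excess r S0 T (\<lambda>i. \<theta> i * S0 i) \<omega> =
    a * (1 + r) + (\<Sum>i\<in>UNIV. \<theta> i * T i \<omega>) - (1 + r) * (a * 1 + (\<Sum>i\<in>UNIV. \<theta> i * S0 i))"
proof -
  have "\<And>i. \<theta> i * S0 i * (ret S0 T i \<omega> - r) = \<theta> i * T i \<omega> - (1 + r) * (\<theta> i * S0 i)"
    using assms unfolding ret_def by (simp add: field_simps less_imp_neq[symmetric])
  then have "excess r S0 T (\<lambda>i. \<theta> i * S0 i) \<omega> = (\<Sum>i\<in>UNIV. \<theta> i * T i \<omega> - (1 + r) * (\<theta> i * S0 i))"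
    unfolding excess_def by simp
  also have "\<dots> = (\<Sum>i\<in>UNIV. \<theta> i * T i \<omega>) - (1 + r) * (\<Sum>i\<in>UNIV. \<theta> i * S0 i)"
    by (simp add: sum_subtractf sum_distrib_left)
  finally show ?thesis by (simp add: algebra_simps)
qed

lemma excess_pi:
  assumes "\<And>i. S0 i > 0"
  shows "excess r S0 T \<pi> \<omega> =
    (- (\<Sum>i\<in>UNIV. (\<pi> i / S0 i) * S0 i) - c) * (1 + r) + (\<Sum>i\<in>UNIV. (\<pi> i / S0 i) * T i \<omega>) - (- c) * (1 + r)"
proof -
  have e: "\<pi> = (\<lambda>i. (\<pi> i / S0 i) * S0 i)" using assms by (auto simp: less_imp_neq[symmetric])
  have "excess r S0 T (\<lambda>i. (\<pi> i / S0 i) * S0 i) \<omega> = 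
     (- (\<Sum>i\<in>UNIV. (\<pi> i / S0 i) * S0 i) - c) * (1 + r) + (\<Sum>i\<in>UNIV. (\<pi> i / S0 i) * T i \<omega>)
      - (1 + r) * ((- (\<Sum>i\<in>UNIV. (\<pi> i / S0 i) * S0 i) - c) * 1 + (\<Sum>i\<in>UNIV. (\<pi> i / S0 i) * S0 i))"
    by (rule excess_theta[OF assms])
  then show ?thesis using e by (simp add: algebra_simps)
qed

lemma WC_le_AE:
  assumes "WC M X \<le> ereal w"
  shows "AE \<omega> in M. X \<omega> \<ge> - w"
proof -
  have "AE \<omega> in M. ereal (- X \<omega>) \<le> WC M X" unfolding WC_def by (rule esssup_AE)
  then show ?thesis
  proof (rule eventually_mono)
    fix x assume "ereal (- X x) \<le> WC M X"
    then have "ereal (- X x) \<le> ereal w" using assms by (rule order_trans)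
    then show "X x \<ge> - w" by simp
  qed
qed

lemma WC_le_I:
  assumes "X \<in> borel_measurable M" "AE \<omega> in M. X \<omega> \<ge> - w"
  shows "WC M X \<le> ereal w"
  unfolding WC_def
  by (rule esssup_I) (use assms in auto)

lemma WC_neg:
  assumes "WC M X < 0"
  shows "\<exists>c>0. AE \<omega> in M. X \<omega> \<ge> c"
proof -
  obtain z where z: "WC M X < ereal z" "ereal z < 0" using ereal_dense2[OF assms] by blast
  then have "AE \<omega> in M. X \<omega> \<ge> - z" by (intro WC_le_AE) simp
  moreover have "-z > 0" using z by simp
  ultimately show ?thesis by blast
qed


lemma AE_pos_measure:
  fixes f :: "'a \<Rightarrow> real"
  assumes "prob_space M" "f \<in> borel_measurable M" "\<not> (AE \<omega> in M. f \<omega> \<le> 0)"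
  shows "measure M {\<omega> \<in> space M. f \<omega> > 0} > 0"
proof (rule ccontr)
  interpret prob_space M by fact
  assume "\<not> ?thesis"
  then have "measure M {\<omega> \<in> space M. f \<omega> > 0} = 0" using measure_nonneg[of M] by (meson not_less order_antisym)
  then have "emeasure M {\<omega> \<in> space M. f \<omega> > 0} = 0" by (simp add: emeasure_eq_measure)
  moreover have [measurable]: "f \<in> borel_measurable M" by fact
  moreover have "{\<omega> \<in> space M. f \<omega> > 0} \<in> sets M" by measurable
  ultimately have "AE \<omega> in M. f \<omega> \<le> 0" by (subst AE_iff_measurable) (auto simp: not_le)
  then show False using assms(3) by simp
qed

lemma AE_pos_set_meas:
  assumes [measurable]: "f \<in> borel_measurable M"
  shows "{\<omega> \<in> space M. f \<omega> > (0::real)} \<in> sets M" by measurable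

lemma part1_fwd:
  assumes "prob_space M" "r > -1" "\<And>i. S0 i > 0" "\<And>i. S1 i \<in> borel_measurable M"
    "\<And>i. integrable M (ret S0 S1 i)"
    and arb: "rho_arbitrage M (WC M) r S0 S1"
  shows "arbitrage_first_kind M r S0 S1"
proof -
  interpret prob_space M by fact
  have meas: "\<And>\<pi>. excess r S0 S1 \<pi> \<in> borel_measurable M" using excess_meas assms(4) by blast
  have int: "\<And>\<pi>. integrable M (excess r S0 S1 \<pi>)" using excess_int assms(1,5) by blast
  have z: "excess r S0 S1 (\<lambda>_. 0) = (\<lambda>_. 0)" by (auto simp: excess_def fun_eq_iff)
  have c0: "(\<lambda>\<omega>. ereal (- 0)) = (\<lambda>\<omega>. 0::ereal)" by (simp add: zero_ereal_def)
  have WC0: "WC M (\<lambda>_. 0) = 0" unfolding WC_def c0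
    by (rule esssup_const) (simp add: emeasure_space_1)
  have "\<not> rho_efficient M (WC M) r S0 S1 (\<lambda>_. 0)" using arb unfolding rho_arbitrage_def by blast
  then have "\<exists>\<pi>. integral\<^sup>L M (excess r S0 S1 \<pi>) \<ge> 0 \<and> WC M (excess r S0 S1 \<pi>) \<le> 0 \<and>
    (integral\<^sup>L M (excess r S0 S1 \<pi>) > 0 \<or> WC M (excess r S0 S1 \<pi>) < 0)"
    unfolding rho_efficient_def z WC0 by (simp, metis order_le_less)
  then obtain \<pi> where p: "integral\<^sup>L M (excess r S0 S1 \<pi>) \<ge> 0" "WC M (excess r S0 S1 \<pi>) \<le> 0"
    "integral\<^sup>L M (excess r S0 S1 \<pi>) > 0 \<or> WC M (excess r S0 S1 \<pi>) < 0"
    by blast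
  have nn: "AE \<omega> in M. excess r S0 S1 \<pi> \<omega> \<ge> 0"
    using WC_le_AE[of M "excess r S0 S1 \<pi>" 0] p(2) by (simp add: zero_ereal_def)
  have nle: "\<not> (AE \<omega> in M. excess r S0 S1 \<pi> \<omega> \<le> 0)"
  proof
    assume le: "AE \<omega> in M. excess r S0 S1 \<pi> \<omega> \<le> 0"
    show False using p(3)
    proof
      assume "integral\<^sup>L M (excess r S0 S1 \<pi>) > 0"
      moreover have "AE \<omega> in M. excess r S0 S1 \<pi> \<omega> = 0" using le nn by eventually_elim simp
      then have "integral\<^sup>L M (excess r S0 S1 \<pi>) = integral\<^sup>L M (\<lambda>_. 0)"
        by (intro integral_cong_AE) (auto simp: meas)
      ultimately show False by simp
    next
      assume "WC M (excess r S0 S1 \<pi>) < 0"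
      then obtain c where c: "c > 0" "AE \<omega> in M. excess r S0 S1 \<pi> \<omega> \<ge> c" using WC_neg by blast
      from le c(2) have "AE \<omega> in M. False" by eventually_elim (use c(1) in linarith)
      then show False by simp
    qed
  qed
  have pos: "measure M {\<omega> \<in> space M. excess r S0 S1 \<pi> \<omega> > 0} > 0"
    by (rule AE_pos_measure[OF assms(1) meas nle])
  define \<theta> where "\<theta> = (\<lambda>i. \<pi> i / S0 i)"
  define \<theta>0 where "\<theta>0 = - (\<Sum>i\<in>UNIV. \<theta> i * S0 i) - 0"
  have eq: "\<And>\<omega>. excess r S0 S1 \<pi> \<omega> = \<theta>0 * (1 + r) + (\<Sum>i\<in>UNIV. \<theta> i * S1 i \<omega>)"
    using excess_pi[OF assms(3), where r=r and T=S1 and \<pi>=\<pi> and c=0] unfolding \<theta>_def \<theta>0_def by simp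
  show ?thesis unfolding arbitrage_first_kind_def
  proof (rule exI[of _ \<theta>0], rule exI[of _ \<theta>], intro conjI)
    show "\<theta>0 * 1 + (\<Sum>i\<in>UNIV. \<theta> i * S0 i) \<le> 0" by (simp add: \<theta>0_def)
    show "AE \<omega> in M. \<theta>0 * (1 + r) + (\<Sum>i\<in>UNIV. \<theta> i * S1 i \<omega>) \<ge> 0" using nn unfolding eq .
    show "measure M {\<omega> \<in> space M. \<theta>0 * (1 + r) + (\<Sum>i\<in>UNIV. \<theta> i * S1 i \<omega>) > 0} > 0"
      using pos unfolding eq .
  qed
qed

lemma part1_bwd:
  assumes "prob_space M" "r > -1" "\<And>i. S0 i > 0" "\<And>i. S1 i \<in> borel_measurable M"
    "\<And>i. integrable M (ret S0 S1 i)"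
    and arb: "arbitrage_first_kind M r S0 S1"
  shows "rho_arbitrage M (WC M) r S0 S1"
proof -
  interpret prob_space M by fact
  have meas: "\<And>\<pi>. excess r S0 S1 \<pi> \<in> borel_measurable M" using excess_meas assms(4) by blast
  have int: "\<And>\<pi>. integrable M (excess r S0 S1 \<pi>)" using excess_int assms(1,5) by blast
  obtain \<theta>0 \<theta> where t: "\<theta>0 * 1 + (\<Sum>i\<in>UNIV. \<theta> i * S0 i) \<le> 0"
    "AE \<omega> in M. \<theta>0 * (1 + r) + (\<Sum>i\<in>UNIV. \<theta> i * S1 i \<omega>) \<ge> 0"
    "measure M {\<omega> \<in> space M. \<theta>0 * (1 + r) + (\<Sum>i\<in>UNIV. \<theta> i * S1 i \<omega>) > 0} > 0"
    using arb unfolding arbitrage_first_kind_def by blast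
  define ps where "ps = (\<lambda>i. \<theta> i * S0 i)"
  have ge: "\<And>\<omega>. excess r S0 S1 ps \<omega> \<ge> \<theta>0 * (1 + r) + (\<Sum>i\<in>UNIV. \<theta> i * S1 i \<omega>)"
  proof -
    fix \<omega>
    have "(1 + r) * (\<theta>0 * 1 + (\<Sum>i\<in>UNIV. \<theta> i * S0 i)) \<le> 0"
      using t(1) assms(2) by (simp add: mult_nonneg_nonpos)
    then show "excess r S0 S1 ps \<omega> \<ge> \<theta>0 * (1 + r) + (\<Sum>i\<in>UNIV. \<theta> i * S1 i \<omega>)"
      unfolding ps_def excess_theta[OF assms(3), where r=r and T=S1 and \<theta>=\<theta> and \<omega>=\<omega> and a=\<theta>0] by linarith
  qed
  have nn: "AE \<omega> in M. excess r S0 S1 ps \<omega> \<ge> 0"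
    using t(2) by eventually_elim (use ge order_trans in blast)
  have "measure M {\<omega> \<in> space M. \<theta>0 * (1 + r) + (\<Sum>i\<in>UNIV. \<theta> i * S1 i \<omega>) > 0}
      \<le> measure M {\<omega> \<in> space M. excess r S0 S1 ps \<omega> > 0}"
    by (rule finite_measure_mono) (use ge meas[of ps] less_le_trans in \<open>auto intro: less_le_trans\<close>)
  with t(3) have mp: "measure M {\<omega> \<in> space M. excess r S0 S1 ps \<omega> > 0} > 0" by simp
  have Epos: "integral\<^sup>L M (excess r S0 S1 ps) > 0"
  proof -
    have "integral\<^sup>L M (excess r S0 S1 ps) \<ge> 0" using nn by (rule integral_nonneg_AE)
    moreover have "integral\<^sup>L M (excess r S0 S1 ps) \<noteq> 0"
    proof
      assume "integral\<^sup>L M (excess r S0 S1 ps) = 0"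
      then have "AE \<omega> in M. excess r S0 S1 ps \<omega> = 0"
        using integral_nonneg_eq_0_iff_AE[OF int nn] by simp
      then have "AE \<omega> in M. excess r S0 S1 ps \<omega> \<le> 0" by eventually_elim simp
      moreover have "{\<omega> \<in> space M. excess r S0 S1 ps \<omega> > 0} \<in> sets M" using meas[of ps] by (rule AE_pos_set_meas)
      ultimately have "emeasure M {\<omega> \<in> space M. excess r S0 S1 ps \<omega> > 0} = 0"
        by (subst (asm) AE_iff_measurable) (auto simp: not_le)
      then show False using mp by (simp add: emeasure_eq_measure)
    qed
    ultimately show ?thesis by simp
  qed
  show ?thesis unfolding rho_arbitrage_def
  proof
    assume "\<exists>\<pi>. rho_efficient M (WC M) r S0 S1 \<pi>"
    then obtain \<pi> where eff: "rho_efficient M (WC M) r S0 S1 \<pi>" by blast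
    define \<pi>' where "\<pi>' = (\<lambda>i. \<pi> i + ps i)"
    have fx: "excess r S0 S1 \<pi>' = (\<lambda>\<omega>. excess r S0 S1 \<pi> \<omega> + excess r S0 S1 ps \<omega>)"
      unfolding \<pi>'_def by (rule ext) (rule excess_add)
    have E: "integral\<^sup>L M (excess r S0 S1 \<pi>') > integral\<^sup>L M (excess r S0 S1 \<pi>)"
      unfolding fx using Epos by (simp add: Bochner_Integration.integral_add[OF int int])
    have W: "WC M (excess r S0 S1 \<pi>') \<le> WC M (excess r S0 S1 \<pi>)"
      unfolding WC_def fx
      by (rule esssup_AE_mono) (use meas[of \<pi>] meas[of ps] nn in \<open>auto elim!: eventually_mono\<close>)
    show False using eff E W unfolding rho_efficient_def by auto
  qed
qed


lemma part2_fwd: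
  assumes "prob_space M" "r > -1" "\<And>i. S0 i > 0" "\<And>i. S1 i \<in> borel_measurable M"
    and arb: "strong_rho_arbitrage M (WC M) r S0 S1"
  shows "arbitrage_second_kind M r S0 S1"
proof -
  interpret prob_space M by fact
  obtain \<pi> where "WC M (excess r S0 S1 \<pi>) < WC M (excess r S0 S1 (\<lambda>_. 0))"
    using arb unfolding strong_rho_arbitrage_def by blast
  moreover have z: "excess r S0 S1 (\<lambda>_. 0) = (\<lambda>_. 0)" by (auto simp: excess_def fun_eq_iff)
  moreover have c0: "(\<lambda>\<omega>. ereal (- 0)) = (\<lambda>\<omega>. 0::ereal)" by (simp add: zero_ereal_def)
  moreover have WC0: "WC M (\<lambda>_. 0) = 0" unfolding WC_def c0
    by (rule esssup_const) (simp add: emeasure_space_1)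
  ultimately have "WC M (excess r S0 S1 \<pi>) < 0" by simp
  then obtain c where c: "c > 0" "AE \<omega> in M. excess r S0 S1 \<pi> \<omega> \<ge> c" using WC_neg by blast
  define \<theta> where "\<theta> = (\<lambda>i. \<pi> i / S0 i)"
  define \<theta>0 where "\<theta>0 = - (\<Sum>i\<in>UNIV. \<theta> i * S0 i) - c / (1 + r)"
  have r1: "1 + r > 0" using assms(2) by simp
  have eq: "\<And>\<omega>. excess r S0 S1 \<pi> \<omega> = \<theta>0 * (1 + r) + (\<Sum>i\<in>UNIV. \<theta> i * S1 i \<omega>) + c"
    using excess_pi[OF assms(3), where r=r and T=S1 and \<pi>=\<pi> and c="c / (1 + r)"] r1
    unfolding \<theta>_def \<theta>0_def by simp
  show ?thesis unfolding arbitrage_second_kind_def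
  proof (rule exI[of _ \<theta>0], rule exI[of _ \<theta>], intro conjI)
    show "\<theta>0 * 1 + (\<Sum>i\<in>UNIV. \<theta> i * S0 i) < 0" using c(1) r1 by (simp add: \<theta>0_def)
    show "AE \<omega> in M. \<theta>0 * (1 + r) + (\<Sum>i\<in>UNIV. \<theta> i * S1 i \<omega>) \<ge> 0"
      using c(2) unfolding eq by simp
  qed
qed

lemma part2_bwd:
  assumes "prob_space M" "r > -1" "\<And>i. S0 i > 0" "\<And>i. S1 i \<in> borel_measurable M"
    "\<And>i. integrable M (ret S0 S1 i)"
    and arb: "arbitrage_second_kind M r S0 S1"
  shows "strong_rho_arbitrage M (WC M) r S0 S1"
proof -
  interpret prob_space M by fact
  have meas: "\<And>\<pi>. excess r S0 S1 \<pi> \<in> borel_measurable M" using excess_meas assms(4) by blast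
  have int: "\<And>\<pi>. integrable M (excess r S0 S1 \<pi>)" using excess_int assms(1,5) by blast
  obtain \<theta>0 \<theta> where t: "\<theta>0 * 1 + (\<Sum>i\<in>UNIV. \<theta> i * S0 i) < 0"
    "AE \<omega> in M. \<theta>0 * (1 + r) + (\<Sum>i\<in>UNIV. \<theta> i * S1 i \<omega>) \<ge> 0"
    using arb unfolding arbitrage_second_kind_def by blast
  define ps where "ps = (\<lambda>i. \<theta> i * S0 i)"
  define c where "c = - (1 + r) * (\<theta>0 * 1 + (\<Sum>i\<in>UNIV. \<theta> i * S0 i))"
  have r1: "1 + r > 0" using assms(2) by simp
  have cpos: "c > 0" unfolding c_def by (rule mult_neg_neg) (use t(1) r1 in auto)
  have pw: "\<And>\<omega>. excess r S0 S1 ps \<omega> = \<theta>0 * (1 + r) + (\<Sum>i\<in>UNIV. \<theta> i * S1 i \<omega>) + c"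
    unfolding ps_def c_def excess_theta[OF assms(3), where r=r and T=S1 and \<theta>=\<theta> and a=\<theta>0]
    by (simp add: algebra_simps)
  have ge: "AE \<omega> in M. excess r S0 S1 ps \<omega> \<ge> c"
    using t(2) by eventually_elim (subst pw, linarith)
  have Ec: "integral\<^sup>L M (excess r S0 S1 ps) \<ge> c"
  proof -
    have "integral\<^sup>L M (\<lambda>_. c) \<le> integral\<^sup>L M (excess r S0 S1 ps)"
      by (rule integral_mono_AE) (use int ge in auto)
    then show ?thesis by (simp add: prob_space)
  qed
  show ?thesis unfolding strong_rho_arbitrage_def
  proof
    fix \<pi>
    show "\<exists>\<pi>'. integral\<^sup>L M (excess r S0 S1 \<pi>') > integral\<^sup>L M (excess r S0 S1 \<pi>) \<and>
              WC M (excess r S0 S1 \<pi>') < WC M (excess r S0 S1 \<pi>)"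
    proof (cases "WC M (excess r S0 S1 \<pi>)")
      case (real w)
      define \<pi>' where "\<pi>' = (\<lambda>i. \<pi> i + ps i)"
      have fx: "excess r S0 S1 \<pi>' = (\<lambda>\<omega>. excess r S0 S1 \<pi> \<omega> + excess r S0 S1 ps \<omega>)"
        unfolding \<pi>'_def by (rule ext) (rule excess_add)
      have E: "integral\<^sup>L M (excess r S0 S1 \<pi>') > integral\<^sup>L M (excess r S0 S1 \<pi>)"
        unfolding fx using Ec cpos by (simp add: Bochner_Integration.integral_add[OF int int])
      have a1: "AE \<omega> in M. excess r S0 S1 \<pi> \<omega> \<ge> - w" using real by (intro WC_le_AE) simp
      have "AE \<omega> in M. excess r S0 S1 \<pi>' \<omega> \<ge> - (w - c)"
        using a1 ge unfolding fx by eventually_elim simp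
      then have "WC M (excess r S0 S1 \<pi>') \<le> ereal (w - c)" by (rule WC_le_I[OF meas])
      also have "\<dots> < WC M (excess r S0 S1 \<pi>)" using real cpos by simp
      finally show ?thesis using E by blast
    next
      case PInf
      define l where "l = (\<bar>integral\<^sup>L M (excess r S0 S1 \<pi>)\<bar> + 1) / c"
      have lpos: "l > 0" unfolding l_def using cpos by simp
      define \<pi>' where "\<pi>' = (\<lambda>i. l * ps i)"
      have fx: "excess r S0 S1 \<pi>' = (\<lambda>\<omega>. l * excess r S0 S1 ps \<omega>)"
        unfolding \<pi>'_def by (rule ext) (rule excess_scale)
      have "integral\<^sup>L M (excess r S0 S1 \<pi>') = l * integral\<^sup>L M (excess r S0 S1 ps)"
        unfolding fx by simp
      also have "\<dots> \<ge> l * c" using Ec lpos by simp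
      also have "l * c = \<bar>integral\<^sup>L M (excess r S0 S1 \<pi>)\<bar> + 1" unfolding l_def using cpos by simp
      finally have E: "integral\<^sup>L M (excess r S0 S1 \<pi>') > integral\<^sup>L M (excess r S0 S1 \<pi>)" by linarith
      have "AE \<omega> in M. excess r S0 S1 \<pi>' \<omega> \<ge> - (- (l * c))"
        using ge unfolding fx by eventually_elim (use lpos in simp)
      then have "WC M (excess r S0 S1 \<pi>') \<le> ereal (- (l * c))" by (rule WC_le_I[OF meas])
      also have "\<dots> < WC M (excess r S0 S1 \<pi>)" using PInf by simp
      finally show ?thesis using E by blast
    next
      case MInf
      have "AE \<omega> in M. ereal (- excess r S0 S1 \<pi> \<omega>) \<le> WC M (excess r S0 S1 \<pi>)"
        unfolding WC_def by (rule esssup_AE)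
      then have "AE \<omega> in M. False" unfolding MInf by eventually_elim simp
      then show ?thesis by simp
    qed
  qed
qed

theorem proposition3p22:
  fixes M :: "'a measure" and r :: real
    and S0 :: "'d::finite \<Rightarrow> real" and S1 :: "'d \<Rightarrow> 'a \<Rightarrow> real"
  assumes "prob_space M"
    and "r > -1"
    and "\<And>i. S0 i > 0"
    and "\<And>i. S1 i \<in> borel_measurable M"
    and "nonredundant M r S0 S1"
    and "\<And>i. integrable M (ret S0 S1 i)"
    and "\<exists>i. integral\<^sup>L M (ret S0 S1 i) \<noteq> r"
  shows "(rho_arbitrage M (WC M) r S0 S1 \<longleftrightarrow> arbitrage_first_kind M r S0 S1)
       \<and> (strong_rho_arbitrage M (WC M) r S0 S1 \<longleftrightarrow> arbitrage_second_kind M r S0 S1)"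
  using part1_fwd[OF assms(1-4) assms(6)] part1_bwd[OF assms(1-4) assms(6)]
    part2_fwd[of M r S0 S1, OF assms(1-4)] part2_bwd[OF assms(1-4) assms(6)] by blast

end
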